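(* Let $d=s_c+s_e+s_3$ and $$A=\begin{bmatrix}A_1&A_{12}&0\\0&A_2&0\\0&A_{32}&A_3\end{bmatrix},\quad B=\begin{bmatrix}B_1\\0\\0\end{bmatrix},\quad I_1=\begin{bmatrix}I_{s_c}&0&0\\0&0&0\\0&0&0\end{bmatrix},$$ with $A_1\in\mathbb{R}^{s_c\times s_c}$, $A_2\in\mathbb{R}^{s_e\times s_e}$, $A_3\in\mathbb{R}^{s_3\times s_3}$, $B_1\in\mathbb{R}^{s_c\times d_u}$. Let $K=[K_1\ K_2\ 0]\in\mathbb{R}^{d_u\times d}$ (zero on the third block) with $\rho(A+BK)<1$, and let $P_K=\sum_{t\ge0}\big((A+BK)^t\big)^\top(I_1+K^\top K)(A+BK)^t$. Then $$P_K=\begin{bmatrix}P_1&P_{12}&0\\P_{12}^\top&P_2&0\\0&0&0\end{bmatrix}$$ for some matrices $P_1,P_{12},P_2$, i.e. the third block row and column of $P_K$ vanish.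
   Context: $\rho$ denotes the spectral radius. *)

theory Defs
  imports Jordan_Normal_Form.Spectral_Radius
begin

definition block3 ::
  "'a::zero mat \<Rightarrow> 'a mat \<Rightarrow> 'a mat \<Rightarrow> 'a mat \<Rightarrow> 'a mat \<Rightarrow> 'a mat \<Rightarrow> 'a mat \<Rightarrow> 'a mat \<Rightarrow> 'a mat \<Rightarrow> 'a mat"
  where
  "block3 M11 M12 M13 M21 M22 M23 M31 M32 M33 =
     (let r1 = dim_row M11; r2 = dim_row M22; r3 = dim_row M33;
          c1 = dim_col M11; c2 = dim_col M22; c3 = dim_col M33
      in mat (r1 + r2 + r3) (c1 + c2 + c3)
        (\<lambda>(i, j).
           if i < r1 then
             (if j < c1 then M11 $$ (i, j) else if j < c1 + c2 then M12 $$ (i, j - c1)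
              else M13 $$ (i, j - c1 - c2))
           else if i < r1 + r2 then
             (if j < c1 then M21 $$ (i - r1, j) else if j < c1 + c2 then M22 $$ (i - r1, j - c1)
              else M23 $$ (i - r1, j - c1 - c2))
           else
             (if j < c1 then M31 $$ (i - r1 - r2, j) else if j < c1 + c2 then M32 $$ (i - r1 - r2, j - c1)
              else M33 $$ (i - r1 - r2, j - c1 - c2))))"

definition PK :: "real mat \<Rightarrow> real mat \<Rightarrow> real mat" where
  "PK M Q = mat (dim_row M) (dim_col M)
     (\<lambda>(i, j). (\<Sum>t. ((transpose_mat (M ^\<^sub>m t) * Q * (M ^\<^sub>m t)) $$ (i, j))))"

end

theory Submission imports Defs begin

lemma pow_lower:
  assumes M: "M \<in> carrier_mat n n"
    and Z: "\<And>i j. i < n1 \<Longrightarrow> n1 \<le> j \<Longrightarrow> j < n \<Longrightarrow> M $$ (i,j) = 0"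
  shows "i < n1 \<Longrightarrow> n1 \<le> j \<Longrightarrow> j < n \<Longrightarrow> (M ^\<^sub>m t) $$ (i,j) = (0::real)"
proof (induction t arbitrary: i j)
  case 0
  then show ?case using M by auto
next
  case (Suc t)
  have Mt: "M ^\<^sub>m t \<in> carrier_mat n n" using M by simp
  have "(M ^\<^sub>m Suc t) $$ (i,j) = (\<Sum>k\<in>{0..<n}. (M ^\<^sub>m t) $$ (i,k) * M $$ (k,j))"
    using Suc.prems Mt M by (auto simp: scalar_prod_def)
  also have "\<dots> = 0"
  proof (rule sum.neutral, intro ballI)
    fix k assume k: "k \<in> {0..<n}"
    show "(M ^\<^sub>m t) $$ (i,k) * M $$ (k,j) = 0"
    proof (cases "k < n1")
      case True then show ?thesis using Z Suc.prems by simp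
    next
      case False then show ?thesis using Suc.IH Suc.prems k by simp
    qed
  qed
  finally show ?case .
qed

lemma term_zero:
  assumes X: "X \<in> carrier_mat n n" and Q: "Q \<in> carrier_mat n n"
    and ZX: "\<And>i j. i < n1 \<Longrightarrow> n1 \<le> j \<Longrightarrow> j < n \<Longrightarrow> X $$ (i,j) = 0"
    and ZQ: "\<And>k l. k < n \<Longrightarrow> l < n \<Longrightarrow> n1 \<le> k \<or> n1 \<le> l \<Longrightarrow> Q $$ (k,l) = (0::real)"
    and ij: "i < n" "j < n" "n1 \<le> i \<or> n1 \<le> j"
  shows "(transpose_mat X * Q * X) $$ (i,j) = 0"
proof -
  have "(transpose_mat X * Q * X) $$ (i,j) =
     (\<Sum>l\<in>{0..<n}. (\<Sum>k\<in>{0..<n}. X $$ (k,i) * Q $$ (k,l)) * X $$ (l,j))"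
  proof -
    have XQ: "transpose_mat X * Q \<in> carrier_mat n n" using X Q by simp
    have "(transpose_mat X * Q * X) $$ (i,j) = row (transpose_mat X * Q) i \<bullet> col X j"
      using XQ X ij by (intro index_mult_mat) auto
    also have "\<dots> = (\<Sum>l\<in>{0..<n}. (transpose_mat X * Q) $$ (i,l) * X $$ (l,j))"
      unfolding scalar_prod_def using XQ X ij by (intro sum.cong) auto
    also have "\<dots> = (\<Sum>l\<in>{0..<n}. (\<Sum>k\<in>{0..<n}. X $$ (k,i) * Q $$ (k,l)) * X $$ (l,j))"
    proof (rule sum.cong[OF refl])
      fix l assume "l \<in> {0..<n}"
      then have "(transpose_mat X * Q) $$ (i,l) = row (transpose_mat X) i \<bullet> col Q l"
        using X Q ij by (intro index_mult_mat) auto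
      then show "(transpose_mat X * Q) $$ (i,l) * X $$ (l,j) = (\<Sum>k\<in>{0..<n}. X $$ (k,i) * Q $$ (k,l)) * X $$ (l,j)"
        using X Q ij \<open>l \<in> {0..<n}\<close> by (simp add: scalar_prod_def)
    qed
    finally show ?thesis .
  qed
  also have "\<dots> = 0"
  proof (rule sum.neutral, intro ballI)
    fix l assume l: "l \<in> {0..<n}"
    show "(\<Sum>k\<in>{0..<n}. X $$ (k,i) * Q $$ (k,l)) * X $$ (l,j) = 0"
    proof (cases "n1 \<le> l")
      case True then show ?thesis using ZQ l by simp
    next
      case False
      show ?thesis
      proof (cases "n1 \<le> j")
        case True then show ?thesis using ZX False ij by simp
      next
        case nj: False
        have "(\<Sum>k\<in>{0..<n}. X $$ (k,i) * Q $$ (k,l)) = 0"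
        proof (rule sum.neutral, intro ballI)
          fix k assume k: "k \<in> {0..<n}"
          show "X $$ (k,i) * Q $$ (k,l) = 0"
            using ZX ZQ k l ij nj by (cases "k < n1") auto
        qed
        then show ?thesis by simp
      qed
    qed
  qed
  finally show ?thesis .
qed

lemma term_sym:
  fixes X Q :: "real mat"
  assumes X: "X \<in> carrier_mat n n" and Q: "Q \<in> carrier_mat n n"
    and S: "transpose_mat Q = Q" and ij: "i < n" "j < n"
  shows "(transpose_mat X * Q * X) $$ (i,j) = (transpose_mat X * Q * X) $$ (j,(i::nat))"
proof -
  have "transpose_mat (transpose_mat X * Q * X) = transpose_mat X * transpose_mat Q * X"
  proof -
    have XQ: "transpose_mat X * Q \<in> carrier_mat n n" using X Q by simp
    have "transpose_mat (transpose_mat X * Q * X) = transpose_mat X * transpose_mat (transpose_mat X * Q)"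
      by (rule transpose_mult[OF XQ X])
    also have "transpose_mat (transpose_mat X * Q) = transpose_mat Q * X"
      using X Q transpose_mult[of "transpose_mat X" n n Q n] by simp
    also have "transpose_mat X * (transpose_mat Q * X) = transpose_mat X * transpose_mat Q * X"
      using X Q by (simp add: assoc_mult_mat[of _ n n _ n _ n])
    finally show ?thesis .
  qed
  then have "transpose_mat (transpose_mat X * Q * X) = transpose_mat X * Q * (X :: real mat)" using S by simp
  then have "transpose_mat (transpose_mat X * Q * X) $$ (j,i) = (transpose_mat X * Q * X) $$ (j,i)" by simp
  then show ?thesis using X Q ij by simp
qed

theorem lemma3:
  fixes sc se s3 du :: nat
    and A1 A12 A2 A32 A3 B1 K1 K2 :: "real mat"
  assumes "A1 \<in> carrier_mat sc sc" and "A12 \<in> carrier_mat sc se"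
    and "A2 \<in> carrier_mat se se" and "A32 \<in> carrier_mat s3 se"
    and "A3 \<in> carrier_mat s3 s3" and "B1 \<in> carrier_mat sc du"
    and "K1 \<in> carrier_mat du sc" and "K2 \<in> carrier_mat du se"
  defines "A \<equiv> block3 A1 A12 (0\<^sub>m sc s3) (0\<^sub>m se sc) A2 (0\<^sub>m se s3) (0\<^sub>m s3 sc) A32 A3"
    and "B \<equiv> block3 B1 (0\<^sub>m sc 0) (0\<^sub>m sc 0) (0\<^sub>m se du) (0\<^sub>m se 0) (0\<^sub>m se 0)
                    (0\<^sub>m s3 du) (0\<^sub>m s3 0) (0\<^sub>m s3 0)"
    and "I1 \<equiv> block3 (1\<^sub>m sc) (0\<^sub>m sc se) (0\<^sub>m sc s3) (0\<^sub>m se sc) (0\<^sub>m se se) (0\<^sub>m se s3)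
                     (0\<^sub>m s3 sc) (0\<^sub>m s3 se) (0\<^sub>m s3 s3)"
    and "K \<equiv> block3 K1 K2 (0\<^sub>m du s3) (0\<^sub>m 0 sc) (0\<^sub>m 0 se) (0\<^sub>m 0 s3)
                    (0\<^sub>m 0 sc) (0\<^sub>m 0 se) (0\<^sub>m 0 s3)"
  assumes "spectral_radius (map_mat complex_of_real (A + B * K)) < 1"
  shows "\<exists>P1 P12 P2. P1 \<in> carrier_mat sc sc \<and> P12 \<in> carrier_mat sc se \<and> P2 \<in> carrier_mat se se \<and>
           PK (A + B * K) (I1 + transpose_mat K * K) =
             block3 P1 P12 (0\<^sub>m sc s3) (transpose_mat P12) P2 (0\<^sub>m se s3)
                    (0\<^sub>m s3 sc) (0\<^sub>m s3 se) (0\<^sub>m s3 s3)"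
proof -
  note dims = assms(1-8)
  define n1 where "n1 = sc + se"
  define n where "n = sc + se + s3"
  define M where "M = A + B * K"
  define Q where "Q = I1 + transpose_mat K * K"
  have A: "A \<in> carrier_mat n n" using dims unfolding A_def block3_def n_def by auto
  have B: "B \<in> carrier_mat n du" using dims unfolding B_def block3_def n_def by auto
  have K: "K \<in> carrier_mat du n" using dims unfolding K_def block3_def n_def by auto
  have I: "I1 \<in> carrier_mat n n" unfolding I1_def block3_def n_def by auto
  have M: "M \<in> carrier_mat n n" using A B K unfolding M_def by auto
  have Q: "Q \<in> carrier_mat n n" using I K unfolding Q_def by auto
  have Az: "A $$ (i,j) = 0" if "i < n1" "n1 \<le> j" "j < n" for i j
    using dims that unfolding A_def block3_def n_def n1_def by (auto simp: Let_def)
  have Kz: "K $$ (m,j) = 0" if "m < du" "n1 \<le> j" "j < n" for m j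
    using dims that unfolding K_def block3_def n_def n1_def by (auto simp: Let_def)
  have Iz: "I1 $$ (k,l) = (if k < sc \<and> k = l then 1 else 0)" if "k < n" "l < n" for k l
    using dims that unfolding I1_def block3_def n_def n1_def by (auto simp: Let_def)
  have BKz: "(B * K) $$ (i,j) = 0" if "i < n1" "n1 \<le> j" "j < n" for i j
  proof -
    have "(B * K) $$ (i,j) = row B i \<bullet> col K j"
      using B K that unfolding n1_def n_def by (intro index_mult_mat) auto
    also have "\<dots> = (\<Sum>m\<in>{0..<du}. B $$ (i,m) * K $$ (m,j))"
      unfolding scalar_prod_def using B K that unfolding n1_def n_def by (intro sum.cong) auto
    also have "\<dots> = 0" using Kz that by (intro sum.neutral) auto
    finally show ?thesis .
  qed
  have Mz: "M $$ (i,j) = 0" if "i < n1" "n1 \<le> j" "j < n" for i j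
    using Az BKz that A B K unfolding M_def n1_def by auto
  have KKz: "(transpose_mat K * K) $$ (k,l) = 0" if "k < n" "l < n" "n1 \<le> k \<or> n1 \<le> l" for k l
  proof -
    have "(transpose_mat K * K) $$ (k,l) = row (transpose_mat K) k \<bullet> col K l"
      using K that by (intro index_mult_mat) auto
    also have "\<dots> = (\<Sum>m\<in>{0..<du}. K $$ (m,k) * K $$ (m,l))"
      unfolding scalar_prod_def using K that by (intro sum.cong) auto
    also have "\<dots> = 0" using Kz that by (intro sum.neutral) auto
    finally show ?thesis .
  qed
  have Qz: "Q $$ (k,l) = 0" if "k < n" "l < n" "n1 \<le> k \<or> n1 \<le> l" for k l
    using KKz[OF that] Iz[OF that(1,2)] that I K unfolding Q_def n1_def by auto
  have QS: "transpose_mat Q = Q"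
  proof (rule eq_matI)
    fix i j assume ij: "i < dim_row Q" "j < dim_col Q"
    have "(transpose_mat K * K) $$ (j,i) = row (transpose_mat K) j \<bullet> col K i"
      using K Q ij by (intro index_mult_mat) auto
    also have "\<dots> = (\<Sum>m\<in>{0..<du}. K $$ (m,j) * K $$ (m,i))"
      unfolding scalar_prod_def using K Q ij by (intro sum.cong) auto
    also have "\<dots> = (\<Sum>m\<in>{0..<du}. K $$ (m,i) * K $$ (m,j))" by (simp add: mult.commute)
    also have "\<dots> = row (transpose_mat K) i \<bullet> col K j"
      unfolding scalar_prod_def using K Q ij by (intro sum.cong) auto
    also have "\<dots> = (transpose_mat K * K) $$ (i,j)"
      using K Q ij by (intro index_mult_mat[symmetric]) auto
    finally have "(transpose_mat K * K) $$ (j,i) = (transpose_mat K * K) $$ (i,j)" .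
    then show "transpose_mat Q $$ (i,j) = Q $$ (i,j)"
      using ij Q I K Iz unfolding Q_def by auto
  qed (use Q in auto)
  define T where "T t = transpose_mat (M ^\<^sub>m t) * Q * M ^\<^sub>m t" for t
  have Tz: "T t $$ (i,j) = 0" if "i < n" "j < n" "n1 \<le> i \<or> n1 \<le> j" for t i j
    unfolding T_def
    by (rule term_zero[of _ n _ n1]) (use M Q that pow_lower[OF M Mz] Qz in auto)
  have TS: "T t $$ (i,j) = T t $$ (j,i)" if "i < n" "j < n" for t i j
    unfolding T_def by (rule term_sym[of _ n]) (use M Q QS that in auto)
  define P where "P = PK M Q"
  have P: "P \<in> carrier_mat n n" using M unfolding P_def PK_def by auto
  have Pe: "P $$ (i,j) = (\<Sum>t. T t $$ (i,j))" if "i < n" "j < n" for i j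
    using M that unfolding P_def PK_def T_def by auto
  have Pz: "P $$ (i,j) = 0" if "i < n" "j < n" "n1 \<le> i \<or> n1 \<le> j" for i j
    using Pe[OF that(1,2)] Tz[OF that] by simp
  have PS: "P $$ (i,j) = P $$ (j,i)" if "i < n" "j < n" for i j
    using Pe[OF that] Pe[OF that(2,1)] TS[OF that] by simp
  define P1 where "P1 = mat sc sc (\<lambda>(i,j). P $$ (i,j))"
  define P12 where "P12 = mat sc se (\<lambda>(i,j). P $$ (i,j + sc))"
  define P2 where "P2 = mat se se (\<lambda>(i,j). P $$ (i + sc,j + sc))"
  have "P = block3 P1 P12 (0\<^sub>m sc s3) (transpose_mat P12) P2 (0\<^sub>m se s3)
                    (0\<^sub>m s3 sc) (0\<^sub>m s3 se) (0\<^sub>m s3 s3)"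
  proof (rule eq_matI)
    fix i j assume ij: "i < dim_row (block3 P1 P12 (0\<^sub>m sc s3) (transpose_mat P12) P2 (0\<^sub>m se s3)
                    (0\<^sub>m s3 sc) (0\<^sub>m s3 se) (0\<^sub>m s3 s3))"
      "j < dim_col (block3 P1 P12 (0\<^sub>m sc s3) (transpose_mat P12) P2 (0\<^sub>m se s3)
                    (0\<^sub>m s3 sc) (0\<^sub>m s3 se) (0\<^sub>m s3 s3))"
    then have ij': "i < n" "j < n" unfolding block3_def n_def P1_def P2_def by auto
    show "P $$ (i,j) = block3 P1 P12 (0\<^sub>m sc s3) (transpose_mat P12) P2 (0\<^sub>m se s3)
                    (0\<^sub>m s3 sc) (0\<^sub>m s3 se) (0\<^sub>m s3 s3) $$ (i,j)"
      using ij' Pz PS[of j i] unfolding block3_def P1_def P2_def P12_def n_def n1_def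
      by (auto simp: Let_def)
  qed (use P in \<open>auto simp: block3_def P1_def P2_def n_def\<close>)
  moreover have "P1 \<in> carrier_mat sc sc" "P12 \<in> carrier_mat sc se" "P2 \<in> carrier_mat se se"
    unfolding P1_def P12_def P2_def by auto
  ultimately show ?thesis unfolding P_def M_def Q_def by blast
qed

end
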